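(* Assume $n\ge2$. Then at most one zero of $F$ is acceptable. Consequently, the maximum-likelihood linear model $f(x)=\lambda(1+a(x-x_A))$ with non-negative Poisson means in all bins, obtained from an acceptable zero $a$ of $F$ together with $\lambda=\lambda(a)$, is unique when it exists.
   Context: Data: an integer $N\ge 2$, reals $x_A<x_B$, $R=x_B-x_A$, and bins $i=1,\dots,N$ with widths $\Delta x_i>0$ and centers $x_i$ that tile $[x_A,x_B]$ contiguously in increasing order, so that $x_1-x_A=\Delta x_1/2$, $x_N-x_A=R-\Delta x_N/2$ and $0<x_1-x_A<\dots<x_N-x_A<R$. The counts are $y_i\in\{0,1,2,\dots\}$, $M=\sum_i y_i$, and $n$ is the number of indices with $y_i\ge1$. Write $d_i=x_i-x_A$. Define $$g(a)=\sum_{i=1}^N y_i\frac{d_i}{1+a d_i}$$ for $a\notin\{-1/d_i: y_i\ge 1\}$. Define $$F(a)=1+\frac R2\Big(a-\frac{M}{g(a)}\Big)$$ wherever $g(a)$ is finite and nonzero; at poles of $g$, $F(a)=1+aR/2$ by continuity. Let $\lambda(a)=M/(R(1+aR/2))$ for $a\neq-2/R$. A zero $a^*$ of $F$ is called acceptable if $a^*\ne-2/R$ and $\lambda(a^* )(1+a^*d_i)\ge0$ for all $i$, i.e. the Poisson means $\mu_i=\lambda(a^* )(1+a^*d_i)\Delta x_i$ are all non-negative. *)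

theory Defs
  imports Complex_Main
begin

text \<open>Bins are indexed by i = 1..N; w i is the width Delta x_i, c i the center x_i,
  y i the count.  d i = x_i - x_A.\<close>

definition Mtot :: "nat \<Rightarrow> (nat \<Rightarrow> nat) \<Rightarrow> real" where
  "Mtot N y = (\<Sum>i=1..N. real (y i))"

definition nocc :: "nat \<Rightarrow> (nat \<Rightarrow> nat) \<Rightarrow> nat" where
  "nocc N y = card {i \<in> {1..N}. y i \<ge> 1}"

definition gfun :: "nat \<Rightarrow> real \<Rightarrow> (nat \<Rightarrow> real) \<Rightarrow> (nat \<Rightarrow> nat) \<Rightarrow> real \<Rightarrow> real" where
  "gfun N xA c y a = (\<Sum>i=1..N. real (y i) * (c i - xA) / (1 + a * (c i - xA)))"

definition is_pole :: "nat \<Rightarrow> real \<Rightarrow> (nat \<Rightarrow> real) \<Rightarrow> (nat \<Rightarrow> nat) \<Rightarrow> real \<Rightarrow> bool" where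
  "is_pole N xA c y a = (\<exists>i\<in>{1..N}. y i \<ge> 1 \<and> 1 + a * (c i - xA) = 0)"

text \<open>F as a partial function: None where F is undefined (g finite and zero).\<close>
definition Ffun :: "nat \<Rightarrow> real \<Rightarrow> real \<Rightarrow> (nat \<Rightarrow> real) \<Rightarrow> (nat \<Rightarrow> nat) \<Rightarrow> real \<Rightarrow> real option" where
  "Ffun N xA xB c y a =
     (if is_pole N xA c y a then Some (1 + a * (xB - xA) / 2)
      else if gfun N xA c y a = 0 then None
      else Some (1 + (xB - xA) / 2 * (a - Mtot N y / gfun N xA c y a)))"

definition lam :: "nat \<Rightarrow> real \<Rightarrow> real \<Rightarrow> (nat \<Rightarrow> nat) \<Rightarrow> real \<Rightarrow> real" where
  "lam N xA xB y a = Mtot N y / ((xB - xA) * (1 + a * (xB - xA) / 2))"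

definition acceptable :: "nat \<Rightarrow> real \<Rightarrow> real \<Rightarrow> (nat \<Rightarrow> real) \<Rightarrow> (nat \<Rightarrow> nat) \<Rightarrow> real \<Rightarrow> bool" where
  "acceptable N xA xB c y a \<longleftrightarrow>
     Ffun N xA xB c y a = Some 0 \<and> a \<noteq> -2 / (xB - xA) \<and>
     (\<forall>i\<in>{1..N}. lam N xA xB y a * (1 + a * (c i - xA)) \<ge> 0)"

end

theory Submission
  imports Defs
begin

lemma crit:
  fixes S :: "nat set" and y d :: "nat \<Rightarrow> real"
  assumes fin: "finite S" and ypos: "\<forall>i\<in>S. y i \<ge> 0"
    and pos: "\<forall>i\<in>S. y i > 0 \<longrightarrow> l1 + b1*d i > 0 \<and> l2 + b2*d i > 0"
    and e1: "(\<Sum>i\<in>S. y i/(l1+b1*d i)) = R" and f1: "(\<Sum>i\<in>S. y i*d i/(l1+b1*d i)) = Q"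
    and e2: "(\<Sum>i\<in>S. y i/(l2+b2*d i)) = R" and f2: "(\<Sum>i\<in>S. y i*d i/(l2+b2*d i)) = Q"
  shows "\<forall>i\<in>S. y i > 0 \<longrightarrow> l1 + b1*d i = l2 + b2*d i"
proof -
  define T where "T i = y i*((l2-l1)+(b2-b1)*d i)" for i
  have h1: "(\<Sum>i\<in>S. T i/(l1+b1*d i)) = (l2-l1)*R + (b2-b1)*Q"
  proof -
    have "(\<Sum>i\<in>S. T i/(l1+b1*d i)) = (\<Sum>i\<in>S. (l2-l1)*(y i/(l1+b1*d i)) + (b2-b1)*(y i*d i/(l1+b1*d i)))"
      by (rule sum.cong) (auto simp: T_def add_divide_distrib diff_divide_distrib algebra_simps)
    also have "\<dots> = (l2-l1)*R + (b2-b1)*Q"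
      by (simp add: sum.distrib sum_distrib_left flip: e1 f1)
    finally show ?thesis .
  qed
  have h2: "(\<Sum>i\<in>S. T i/(l2+b2*d i)) = (l2-l1)*R + (b2-b1)*Q"
  proof -
    have "(\<Sum>i\<in>S. T i/(l2+b2*d i)) = (\<Sum>i\<in>S. (l2-l1)*(y i/(l2+b2*d i)) + (b2-b1)*(y i*d i/(l2+b2*d i)))"
      by (rule sum.cong) (auto simp: T_def add_divide_distrib diff_divide_distrib algebra_simps)
    also have "\<dots> = (l2-l1)*R + (b2-b1)*Q"
      by (simp add: sum.distrib sum_distrib_left flip: e2 f2)
    finally show ?thesis .
  qed
  define U where "U i = y i*((l2+b2*d i)-(l1+b1*d i))^2/((l1+b1*d i)*(l2+b2*d i))" for i
  have U: "U i = T i/(l1+b1*d i) - T i/(l2+b2*d i)" if "i \<in> S" for i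
  proof (cases "y i > 0")
    case True
    then have a: "l1+b1*d i > 0" "l2+b2*d i > 0" using pos that by auto
    show ?thesis unfolding U_def T_def using a
      by (simp add: field_simps power2_eq_square)
  next
    case False
    then have "y i = 0" using ypos that by force
    then show ?thesis by (simp add: U_def T_def)
  qed
  have "(\<Sum>i\<in>S. U i) = 0"
    using U h1 h2 by (simp add: sum_subtractf)
  moreover have "\<forall>i\<in>S. U i \<ge> 0"
  proof
    fix i assume i: "i \<in> S"
    show "U i \<ge> 0"
    proof (cases "y i > 0")
      case True
      then have a: "l1+b1*d i > 0" "l2+b2*d i > 0" using pos i by auto
      then show ?thesis unfolding U_def using ypos i by simp
    next
      case False
      then have "y i = 0" using ypos i by force
      then show ?thesis by (simp add: U_def)
    qed
  qed
  ultimately have z: "\<forall>i\<in>S. U i = 0" using sum_nonneg_eq_0_iff[OF fin] by blast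
  show ?thesis
  proof (intro ballI impI)
    fix i assume i: "i \<in> S" and yp: "y i > 0"
    then have a: "l1+b1*d i > 0" "l2+b2*d i > 0" using pos by auto
    have "U i = 0" using z i by blast
    then have "((l2+b2*d i)-(l1+b1*d i))^2 = 0" using a yp unfolding U_def by simp
    then show "l1 + b1*d i = l2 + b2*d i" by simp
  qed
qed

lemma sol:
  assumes acc: "acceptable N xA xB c y a" and lt: "xA < xB" and Mp: "Mtot N y > 0"
  defines "l \<equiv> lam N xA xB y a"
  shows "l \<noteq> 0"
    and "\<forall>i\<in>{1..N}. real (y i) > 0 \<longrightarrow> l + (l*a)*(c i - xA) > 0"
    and "(\<Sum>i=1..N. real (y i)/(l + (l*a)*(c i - xA))) = xB - xA"
    and "(\<Sum>i=1..N. real (y i)*(c i - xA)/(l + (l*a)*(c i - xA))) = (xB - xA)^2/2"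
proof -
  define R where "R = xB - xA"
  define M where "M = Mtot N y"
  define g where "g = gfun N xA c y a"
  define D where "D = 1 + a*R/2"
  have R: "R > 0" using lt R_def by simp
  have F: "Ffun N xA xB c y a = Some 0" and an: "a \<noteq> -2/R"
    and nn: "\<forall>i\<in>{1..N}. l * (1 + a * (c i - xA)) \<ge> 0"
    using acc unfolding acceptable_def l_def R_def by auto
  have D: "D \<noteq> 0"
  proof
    assume "D = 0"
    then have "a = -2/R" using R unfolding D_def by (simp add: field_simps)
    then show False using an by simp
  qed
  have np: "\<not> is_pole N xA c y a"
  proof
    assume "is_pole N xA c y a"
    then have "1 + a * (xB - xA) / 2 = 0" using F unfolding Ffun_def by simp
    then have "D = 0" unfolding D_def R_def by simp
    then show False using D by simp
  qed
  then have occ: "\<forall>i\<in>{1..N}. y i \<ge> 1 \<longrightarrow> 1 + a * (c i - xA) \<noteq> 0"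
    unfolding is_pole_def by auto
  have g0: "g \<noteq> 0" and F0: "1 + R/2 * (a - M/g) = 0"
    using F np unfolding Ffun_def g_def M_def R_def by (auto split: if_splits)
  have gv: "g = R*M/(2*D)"
    using F0 g0 D R unfolding D_def by (simp add: field_simps)
  have lv: "l = M/(R*D)" unfolding l_def lam_def M_def R_def D_def by simp
  have M: "M > 0" using Mp M_def by simp
  show l0: "l \<noteq> 0" using lv M R D by simp
  have mu: "l + (l*a)*(c i - xA) = l*(1 + a*(c i - xA))" for i by (simp add: algebra_simps)
  show "\<forall>i\<in>{1..N}. real (y i) > 0 \<longrightarrow> l + (l*a)*(c i - xA) > 0"
  proof (intro ballI impI)
    fix i assume i: "i \<in> {1..N}" and y: "real (y i) > 0"
    then have "1 + a*(c i - xA) \<noteq> 0" using occ by auto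
    with l0 have "l*(1 + a*(c i - xA)) \<noteq> 0" by simp
    moreover have "0 \<le> l*(1 + a*(c i - xA))" using nn i by blast
    ultimately show "l + (l*a)*(c i - xA) > 0" unfolding mu by linarith
  qed
  have E1: "(\<Sum>i=1..N. real (y i)*(c i - xA)/(l + (l*a)*(c i - xA))) = g / l"
    unfolding g_def gfun_def sum_divide_distrib mu by (rule sum.cong) auto
  show "(\<Sum>i=1..N. real (y i)*(c i - xA)/(l + (l*a)*(c i - xA))) = (xB - xA)^2/2"
  proof -
    have "g / l = R^2/2" unfolding gv lv using D R M by (simp add: field_simps power2_eq_square)
    then show ?thesis using E1 R_def by simp
  qed
  have S: "(\<Sum>i=1..N. real (y i)/(1 + a*(c i - xA))) = M - a*g"
  proof -
    have "(\<Sum>i=1..N. real (y i)/(1 + a*(c i - xA))) = (\<Sum>i=1..N. real (y i) - a*(real (y i) * (c i - xA) / (1 + a * (c i - xA))))"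
    proof (rule sum.cong)
      fix i assume i: "i \<in> {1..N}"
      show "real (y i)/(1 + a*(c i - xA)) = real (y i) - a*(real (y i) * (c i - xA) / (1 + a * (c i - xA)))"
      proof (cases "y i \<ge> 1")
        case True
        then have "1 + a*(c i - xA) \<noteq> 0" using occ i by auto
        then show ?thesis by (simp add: field_simps)
      next
        case False then have "y i = 0" by simp
        then show ?thesis by simp
      qed
    qed simp
    also have "\<dots> = M - a*g"
      unfolding M_def Mtot_def g_def gfun_def by (simp add: sum_subtractf sum_distrib_left)
    finally show ?thesis .
  qed
  have E2: "(\<Sum>i=1..N. real (y i)/(l + (l*a)*(c i - xA))) = (M - a*g) / l"
    unfolding S[symmetric] sum_divide_distrib mu by (rule sum.cong) auto
  show "(\<Sum>i=1..N. real (y i)/(l + (l*a)*(c i - xA))) = xB - xA"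
  proof -
    have nz: "M * 8 + M * (R * (a * 4)) \<noteq> 0"
    proof -
      have "M * 8 + M * (R * (a * 4)) = 8*M*D" unfolding D_def by (simp add: algebra_simps)
      then show ?thesis using D M by simp
    qed
    have e: "(M * (R * 8) + M * (R * (R * (a * 4)))) = R * (M * 8 + M * (R * (a * 4)))"
      by (simp add: algebra_simps)
    have "(M - a*g) / l = R" unfolding gv lv using D R M nz e unfolding D_def
      by (simp add: field_simps)
    then show ?thesis using E2 R_def by simp
  qed
qed

theorem mainTheorem11:
  fixes N :: nat and xA xB :: real and w c :: "nat \<Rightarrow> real" and y :: "nat \<Rightarrow> nat"
  assumes "N \<ge> 2"
    and "xA < xB"
    and "\<forall>i\<in>{1..N}. w i > 0"
    and "\<forall>i\<in>{1..N}. c i = xA + (\<Sum>j=1..<i. w j) + w i / 2"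
    and "(\<Sum>i=1..N. w i) = xB - xA"
    and "nocc N y \<ge> 2"
    and "acceptable N xA xB c y a1"
    and "acceptable N xA xB c y a2"
  shows "a1 = a2 \<and>
    (\<lambda>x. lam N xA xB y a1 * (1 + a1 * (x - xA))) = (\<lambda>x. lam N xA xB y a2 * (1 + a2 * (x - xA)))"
  proof -
  note A = assms
  obtain i where i: "i \<in> {k \<in> {1..N}. y k \<ge> 1}"
    using A(6) unfolding nocc_def by (metis (no_types, lifting) Suc_1 card.empty ex_in_conv not_less_eq_eq zero_le)
  have fin: "finite {k \<in> {1..N}. y k \<ge> 1}" by simp
  have "card ({k \<in> {1..N}. y k \<ge> 1} - {i}) \<ge> 1"
    using A(6) i fin unfolding nocc_def by (simp add: card_Diff_singleton)
  then obtain j where j: "j \<in> {k \<in> {1..N}. y k \<ge> 1} - {i}"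
    by (metis card.empty ex_in_conv not_one_le_zero)
  have mono: "c p < c q" if pq: "p < q" "p \<in> {1..N}" "q \<in> {1..N}" for p q
  proof -
    have u: "{1..<q} = {1..<p} \<union> {p..<q}" using pq by auto
    have "(\<Sum>k=1..<q. w k) = (\<Sum>k=1..<p. w k) + (\<Sum>k=p..<q. w k)"
      unfolding u by (rule sum.union_disjoint) auto
    moreover have "(\<Sum>k=p..<q. w k) = w p + (\<Sum>k=Suc p..<q. w k)"
      using pq by (simp add: sum.atLeast_Suc_lessThan)
    moreover have "(\<Sum>k=Suc p..<q. w k) \<ge> 0"
      using A(3) pq by (intro sum_nonneg) (metis atLeastAtMost_iff atLeastLessThan_iff le_trans less_imp_le Suc_leD)
    moreover have "w p > 0" "w q > 0" using A(3) pq by auto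
    ultimately show ?thesis using A(4) pq by auto
  qed
  have dij: "c i - xA \<noteq> c j - xA"
  proof -
    have "i \<noteq> j" using j by auto
    then have "i < j \<or> j < i" by auto
    then show ?thesis using mono i j by force
  qed
  have Mp: "Mtot N y > 0"
  proof -
    have "real (y i) \<le> Mtot N y" unfolding Mtot_def
      using i by (intro member_le_sum) auto
    then show ?thesis using i by auto
  qed
  define l1 where "l1 = lam N xA xB y a1"
  define l2 where "l2 = lam N xA xB y a2"
  note s1 = sol[OF A(7) A(2) Mp, folded l1_def]
  note s2 = sol[OF A(8) A(2) Mp, folded l2_def]
  have cr: "\<forall>k\<in>{1..N}. real (y k) > 0 \<longrightarrow> l1 + (l1*a1)*(c k - xA) = l2 + (l2*a2)*(c k - xA)"
    by (rule crit[where y="\<lambda>k. real (y k)" and d="\<lambda>k. c k - xA"]) (use s1 s2 in auto)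
  have ei: "l1 + (l1*a1)*(c i - xA) = l2 + (l2*a2)*(c i - xA)" using cr i by auto
  have ej: "l1 + (l1*a1)*(c j - xA) = l2 + (l2*a2)*(c j - xA)" using cr j by auto
  have "(l1*a1 - l2*a2) * ((c i - xA) - (c j - xA)) = 0" using ei ej by (simp add: algebra_simps)
  then have b: "l1*a1 = l2*a2" using dij by simp
  then have "l1 = l2" using ei by simp
  then have "a1 = a2" using b s1(1) by simp
  then show ?thesis by simp
qed

end
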